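(* Let $\delta > 0$. There is a function $\epsilon \colon B_{\delta}(\vec 0) \to \mathbb R$ such that for all $\vec \theta \in B_{\delta}(\vec 0)$, \[ \operatorname{Re}(\Phi(\vec \theta)) = e^{-\frac{1}{2} \vec \theta^T M \vec \theta} (1 + \epsilon(\vec \theta)) \] and $|\epsilon(\vec \theta)| \leq \frac{1}{6} (d \delta)^4 e^{\frac{1}{2} d^2 \delta^2}$. Moreover, for all $\vec\theta\in B_\delta(\vec 0)$, \[ |\operatorname{Im}(\Phi(\vec \theta))| \leq \frac{(d \delta)^3}{6}. \] Further, if $d \delta < 1$, then $\operatorname{Re}(\Phi(\vec \theta)) > 1/3$ for all $\vec\theta\in B_\delta(\vec 0)$.
   Context: Let $g\ge 2$, $k\ge 2$ be integers, $\mathbb Z_g$ the integers mod $g$, and $d=\binom{k}{2}(g-1)$. Index the coordinates of $\mathbb R^d$ by pairs $(\{i,j\},a)$ with $1\le i<j\le k$ and $a\in\mathbb Z_g\setminus\{0\}$. Define $Z:(\mathbb Z_g)^k\to\mathbb R^d$ by $[Z(\vec x)]_{\{i,j\},a}=1-1/g$ if $x_i-x_j=a$ and $-1/g$ otherwise, and $\Phi(\vec\theta)=\sum_{\vec x\in(\mathbb Z_g)^k} g^{-k}e^{i\vec\theta\cdot Z(\vec x)}$. Let $B_\delta(\vec 0)=\{\vec\mu\in[-\pi,\pi)^d: \vec\mu\equiv\vec\zeta \pmod{2\pi}$ componentwise, for some $\vec\zeta$ with $|\zeta_{\{i,j\},a}|<\delta$ for all coordinates$\}$. Let $M$ be the $d\times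 d$ matrix indexed like $\mathbb R^d$ with $M_{(\{i,j\},a),(\{m,n\},b)}=\frac{g-1}{g^2}$ if $\{i,j\}=\{m,n\}$ and $a=b$; $-\frac{1}{g^2}$ if $\{i,j\}=\{m,n\}$ and $a\ne b$; and $0$ if $\{i,j\}\ne\{m,n\}$. *)

theory Defs
  imports Complex_Main "HOL-Library.FuncSet"
begin

text \<open>Coordinates of R^d: pairs ((i,j),a) with 1 <= i < j <= k and a in Z_g \ {0},
  where Z_g is represented by {0..<g}.  Vectors are functions on this index set
  (extensional: zero outside).\<close>

definition coords :: "nat \<Rightarrow> nat \<Rightarrow> ((nat \<times> nat) \<times> nat) set" where
  "coords g k = {((i,j),a). 1 \<le> i \<and> i < j \<and> j \<le> k \<and> 1 \<le> a \<and> a < g}"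

definition dimd :: "nat \<Rightarrow> nat \<Rightarrow> nat" where
  "dimd g k = (k choose 2) * (g - 1)"

definition Zgk :: "nat \<Rightarrow> nat \<Rightarrow> (nat \<Rightarrow> nat) set" where
  "Zgk g k = PiE {1..k} (\<lambda>_. {0..<g})"

definition Zvec :: "nat \<Rightarrow> nat \<Rightarrow> (nat \<Rightarrow> nat) \<Rightarrow> ((nat \<times> nat) \<times> nat) \<Rightarrow> real" where
  "Zvec g k x c = (if c \<in> coords g k then
      (case c of ((i,j),a) \<Rightarrow>
        if (int (x i) - int (x j)) mod int g = int a then 1 - 1 / real g else - 1 / real g)
     else 0)"

definition Phi :: "nat \<Rightarrow> nat \<Rightarrow> (((nat \<times> nat) \<times> nat) \<Rightarrow> real) \<Rightarrow> complex" where
  "Phi g k \<theta> = (\<Sum>x\<in>Zgk g k. complex_of_real (1 / real g ^ k) *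
      exp (\<i> * complex_of_real (\<Sum>c\<in>coords g k. \<theta> c * Zvec g k x c)))"

definition Bdelta :: "nat \<Rightarrow> nat \<Rightarrow> real \<Rightarrow> (((nat \<times> nat) \<times> nat) \<Rightarrow> real) set" where
  "Bdelta g k \<delta> = {\<theta>. (\<forall>c\<in>coords g k. - pi \<le> \<theta> c \<and> \<theta> c < pi \<and>
        (\<exists>\<zeta> (m::int). \<bar>\<zeta>\<bar> < \<delta> \<and> \<theta> c = \<zeta> + 2 * pi * of_int m)) \<and>
      (\<forall>c. c \<notin> coords g k \<longrightarrow> \<theta> c = 0)}"

definition Mmat :: "nat \<Rightarrow> ((nat \<times> nat) \<times> nat) \<Rightarrow> ((nat \<times> nat) \<times> nat) \<Rightarrow> real" where
  "Mmat g c c' = (if fst c = fst c' then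
       (if snd c = snd c' then (real g - 1) / real g ^ 2 else - 1 / real g ^ 2)
     else 0)"

definition quadM :: "nat \<Rightarrow> nat \<Rightarrow> (((nat \<times> nat) \<times> nat) \<Rightarrow> real) \<Rightarrow> real" where
  "quadM g k \<theta> = (\<Sum>c\<in>coords g k. \<Sum>c'\<in>coords g k. \<theta> c * Mmat g c c' * \<theta> c')"

end

theory Submission
  imports Defs
begin


lemma cos_taylor4: "\<bar>cos (x::real) - (1 - x^2/2)\<bar> \<le> x^4/24"
proof -
  obtain t where "cos x = (\<Sum>m<4. cos_coeff m * x ^ m) + (cos(t + 1/2 * real 4 * pi) / fact 4) * x ^ 4"
    using Maclaurin_cos_expansion by blast
  moreover have "(\<Sum>m<4. cos_coeff m * x ^ m) = 1 - x^2/2"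
  proof -
    have e: "{..<4::nat} = {0,1,2,3}" by auto
    have "cos_coeff 0 = 1" "cos_coeff 1 = 0" "cos_coeff 2 = -1/2" "cos_coeff 3 = 0"
      by (simp_all add: cos_coeff_def fact_numeral)
    then show ?thesis unfolding e by simp
  qed
  moreover have "\<bar>(cos(t + 1/2 * real 4 * pi) / fact 4) * x ^ 4\<bar> \<le> x^4/24"
  proof -
    have "\<bar>cos(t + 1/2 * real 4 * pi)\<bar> \<le> 1" by simp
    then have "\<bar>cos(t + 1/2 * real 4 * pi)\<bar> * x^4 \<le> 1 * x^4" by (intro mult_right_mono) auto
    then show ?thesis by (simp add: abs_mult fact_numeral)
  qed
  ultimately show ?thesis by simp
qed

lemma sin_taylor3: "\<bar>sin (x::real) - x\<bar> \<le> \<bar>x\<bar>^3/6"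
proof -
  have "\<bar>sin x - (\<Sum>m<3. sin_coeff m * x ^ m)\<bar> \<le> inverse (fact 3) * \<bar>x\<bar> ^ 3"
    by (rule Maclaurin_sin_bound)
  moreover have "(\<Sum>m<3. sin_coeff m * x ^ m) = x"
    by (simp add: eval_nat_numeral sin_coeff_def)
  ultimately show ?thesis by (simp add: fact_numeral divide_simps)
qed

lemma exp_neg_upper: assumes "(u::real) \<ge> 0" shows "exp (-u) \<le> 1 - u + u^2/2"
proof -
  obtain t where "exp (-u) = (\<Sum>m<3. ((-u) ^ m) / fact m) + (exp t / fact 3) * (-u) ^ 3"
    using Maclaurin_exp_le by blast
  moreover have "(\<Sum>m<3. ((-u) ^ m) / fact m) = 1 - u + u^2/2"
    by (simp add: eval_nat_numeral)
  moreover have "(exp t / fact 3) * (-u) ^ 3 \<le> 0"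
    using assms by (simp add: mult_nonneg_nonpos)
  ultimately show ?thesis by simp
qed

lemma finish:
  fixes q t C :: real
  assumes "0 \<le> q" "q \<le> t^2" "\<bar>C - (1 - q/2)\<bar> \<le> t^4/24"
  shows "\<bar>C * exp (q/2) - 1\<bar> \<le> 1/6 * t^4 * exp (t^2/2)"
proof -
  define u where "u = q/2"
  have u0: "0 \<le> u" "u \<le> t^2/2" using assms unfolding u_def by auto
  have eu: "exp u \<le> exp (t^2/2)" using u0 by simp
  have a: "(1-u) * exp u \<le> 1"
  proof -
    have "1 - u \<le> exp (-u)" using exp_ge_add_one_self[of "-u"] by simp
    then have "(1-u) * exp u \<le> exp (-u) * exp u" by (simp add: mult_right_mono)
    then show ?thesis by (simp add: exp_minus field_simps)
  qed
  have b: "1 - (1-u) * exp u \<le> u^2/2 * exp u"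
  proof -
    have "exp (-u) \<le> 1 - u + u^2/2" using exp_neg_upper u0 by simp
    then have "exp (-u) * exp u \<le> (1 - u + u^2/2) * exp u" by (simp add: mult_right_mono)
    then show ?thesis by (simp add: exp_minus field_simps)
  qed
  have u2: "u^2 \<le> t^4/4"
  proof -
    have "u^2 \<le> (t^2/2)^2" using u0 by (intro power_mono) auto
    then show ?thesis by (simp add: power2_eq_square field_simps eval_nat_numeral)
  qed
  have "C * exp u - 1 = (C - (1-u)) * exp u + ((1-u) * exp u - 1)" by (simp add: algebra_simps)
  then have "\<bar>C * exp u - 1\<bar> \<le> \<bar>(C - (1-u)) * exp u\<bar> + \<bar>(1-u) * exp u - 1\<bar>"
    by (metis abs_triangle_ineq)
  also have "\<dots> = \<bar>C - (1-u)\<bar> * exp u + \<bar>(1-u) * exp u - 1\<bar>" by (simp add: abs_mult)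
  also have "\<dots> \<le> t^4/24 * exp u + u^2/2 * exp u"
    using assms(3) a b unfolding u_def by (intro add_mono mult_right_mono) auto
  also have "\<dots> \<le> t^4/24 * exp u + t^4/8 * exp u"
    using u2 by (intro add_mono mult_right_mono) auto
  also have "\<dots> = 1/6 * t^4 * exp u" by simp
  also have "\<dots> \<le> 1/6 * t^4 * exp (t^2/2)" using eu by (intro mult_left_mono) auto
  finally show ?thesis unfolding u_def .
qed

lemma theta_bound:
  fixes \<theta> \<zeta> \<delta> :: real and m :: int
  assumes "- pi \<le> \<theta>" "\<theta> < pi" "\<bar>\<zeta>\<bar> < \<delta>" "\<theta> = \<zeta> + 2 * pi * of_int m"
  shows "\<bar>\<theta>\<bar> < \<delta>"
proof (cases "m = 0")
  case True then show ?thesis using assms by simp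
next
  case False
  then have "\<bar>real_of_int m\<bar> \<ge> 1" by linarith
  then have "\<bar>2 * pi * of_int m\<bar> \<ge> 2 * pi" using pi_gt_zero by (simp add: abs_mult)
  then show ?thesis using assms pi_gt_zero by linarith
qed



lemma sum_PiE_split:
  fixes f :: "('a \<Rightarrow> 'b) \<Rightarrow> real"
  assumes "finite I" "i \<in> I"
  shows "(\<Sum>x\<in>PiE I B. f x) = (\<Sum>y\<in>PiE (I - {i}) B. \<Sum>v\<in>B i. f (y(i := v)))"
proof -
  have "(\<Sum>x\<in>PiE I B. f x) = (\<Sum>(v,y)\<in>B i \<times> PiE (I - {i}) B. f (y(i := v)))"
    using assms
    by (intro sum.reindex_bij_witness[of _ "\<lambda>(v,y). y(i := v)" "\<lambda>x. (x i, x(i := undefined))"])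
       (auto simp: PiE_def extensional_def)
  also have "\<dots> = (\<Sum>v\<in>B i. \<Sum>y\<in>PiE (I - {i}) B. f (y(i := v)))"
    by (rule sum.cartesian_product[symmetric])
  also have "\<dots> = (\<Sum>y\<in>PiE (I - {i}) B. \<Sum>v\<in>B i. f (y(i := v)))"
    by (rule sum.swap)
  finally show ?thesis .
qed

definition ind :: "bool \<Rightarrow> real" where "ind P = (if P then 1 else 0)"

definition D :: "nat \<Rightarrow> (nat \<Rightarrow> nat) \<Rightarrow> nat \<Rightarrow> nat \<Rightarrow> int" where
  "D g x i j = (int (x i) - int (x j)) mod int g"

lemma one_sol1:
  assumes "a < g"
  shows "(\<Sum>v\<in>{0..<g}. ind ((int v - int w) mod int g = int a)) = 1"
proof -
  define v0 where "v0 = nat ((int w + int a) mod int g)"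
  have "{v\<in>{0..<g}. (int v - int w) mod int g = int a} = {v0}"
  proof safe
    fix v assume v: "v \<in> {0..<g}" "(int v - int w) mod int g = int a"
    then have "int v = int v mod int g" by simp
    also have "\<dots> = ((int v - int w) + int w) mod int g" by simp
    also have "\<dots> = ((int v - int w) mod int g + int w) mod int g" by (rule mod_add_left_eq[symmetric])
    also have "\<dots> = (int w + int a) mod int g" using v(2) by (simp add: add.commute)
    finally show "v = v0" unfolding v0_def by simp
  next
    show "v0 \<in> {0..<g}" using assms unfolding v0_def
      by (simp add: nat_less_iff)
    show "(int v0 - int w) mod int g = int a" using assms unfolding v0_def
      by (simp add: mod_diff_left_eq)
  qed
  then have 1: "(\<Sum>v\<in>{v\<in>{0..<g}. (int v - int w) mod int g = int a}. (1::real)) = 1" by simp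
  have "(\<Sum>v\<in>{0..<g}. ind ((int v - int w) mod int g = int a)) = (\<Sum>v\<in>{v\<in>{0..<g}. (int v - int w) mod int g = int a}. (1::real))"
    unfolding ind_def by (rule sum.inter_filter[symmetric]) simp
  then show ?thesis using 1 by simp
qed

lemma one_sol2:
  assumes "a < g"
  shows "(\<Sum>v\<in>{0..<g}. ind ((int w - int v) mod int g = int a)) = 1"
proof -
  define v0 where "v0 = nat ((int w - int a) mod int g)"
  have "{v\<in>{0..<g}. (int w - int v) mod int g = int a} = {v0}"
  proof safe
    fix v assume v: "v \<in> {0..<g}" "(int w - int v) mod int g = int a"
    then have "int v = int v mod int g" by simp
    also have "\<dots> = (int w - (int w - int v)) mod int g" by simp
    also have "\<dots> = (int w - (int w - int v) mod int g) mod int g" by (rule mod_diff_right_eq[symmetric])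
    also have "\<dots> = (int w - int a) mod int g" using v(2) by simp
    finally show "v = v0" unfolding v0_def by simp
  next
    show "v0 \<in> {0..<g}" using assms unfolding v0_def
      by (simp add: nat_less_iff)
    show "(int w - int v0) mod int g = int a" using assms unfolding v0_def
      by (simp add: mod_diff_right_eq)
  qed
  then have 1: "(\<Sum>v\<in>{v\<in>{0..<g}. (int w - int v) mod int g = int a}. (1::real)) = 1" by simp
  have "(\<Sum>v\<in>{0..<g}. ind ((int w - int v) mod int g = int a)) = (\<Sum>v\<in>{v\<in>{0..<g}. (int w - int v) mod int g = int a}. (1::real))"
    unfolding ind_def by (rule sum.inter_filter[symmetric]) simp
  then show ?thesis using 1 by simp
qed

lemma card_PiE_g: "finite I \<Longrightarrow> card (PiE I (\<lambda>_. {0..<g::nat})) = g ^ card I"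
  by (simp add: card_PiE)

lemma count1:
  assumes "finite I" "i \<in> I" "j \<in> I" "i \<noteq> j" "a < g"
  shows "(\<Sum>x\<in>PiE I (\<lambda>_. {0..<g}). ind (D g x i j = int a)) = real g ^ (card I - 1)"
proof -
  have "(\<Sum>x\<in>PiE I (\<lambda>_. {0..<g}). ind (D g x i j = int a))
      = (\<Sum>y\<in>PiE (I - {i}) (\<lambda>_. {0..<g}). \<Sum>v\<in>{0..<g}. ind (D g (y(i := v)) i j = int a))"
    by (rule sum_PiE_split[OF assms(1,2)])
  also have "\<dots> = (\<Sum>y\<in>PiE (I - {i}) (\<lambda>_. {0..<g}). 1)"
    using assms by (intro sum.cong refl) (simp add: D_def one_sol1)
  also have "\<dots> = real g ^ (card I - 1)"
    using assms by (simp add: card_PiE_g)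
  finally show ?thesis .
qed

lemma count1':
  assumes "finite I" "i \<in> I" "j \<in> I" "i \<noteq> j" "a < g"
  shows "(\<Sum>x\<in>PiE I (\<lambda>_. {0..<g}). ind (D g x j i = int a)) = real g ^ (card I - 1)"
  using count1[OF assms(1,3,2) _ assms(5)] assms(4) by simp

lemma count2:
  assumes "finite I" "i \<in> I" "j \<in> I" "i \<noteq> j" "m \<in> I" "n \<in> I" "m \<noteq> n"
    "{i,j} \<noteq> {m,n}" "a < g" "b < g"
  shows "(\<Sum>x\<in>PiE I (\<lambda>_. {0..<g}). ind (D g x i j = int a \<and> D g x m n = int b))
          = real g ^ (card I - 2)"
proof (cases "m \<in> {i,j}")
  case False
  have "(\<Sum>x\<in>PiE I (\<lambda>_. {0..<g}). ind (D g x i j = int a \<and> D g x m n = int b))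
      = (\<Sum>y\<in>PiE (I - {m}) (\<lambda>_. {0..<g}). \<Sum>v\<in>{0..<g}.
            ind (D g (y(m := v)) i j = int a \<and> D g (y(m := v)) m n = int b))"
    by (rule sum_PiE_split[OF assms(1,5)])
  also have "\<dots> = (\<Sum>y\<in>PiE (I - {m}) (\<lambda>_. {0..<g}). ind (D g y i j = int a) *
       (\<Sum>v\<in>{0..<g}. ind ((int v - int (y n)) mod int g = int b)))"
    using assms False by (intro sum.cong refl) (auto simp: D_def ind_def sum_distrib_left intro!: sum.cong)
  also have "\<dots> = (\<Sum>y\<in>PiE (I - {m}) (\<lambda>_. {0..<g}). ind (D g y i j = int a))"
    using assms by (simp add: one_sol1)
  also have "\<dots> = real g ^ (card (I - {m}) - 1)"
    using assms False by (intro count1) auto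
  also have "card (I - {m}) - 1 = card I - 2" using assms by simp
  finally show ?thesis .
next
  case True
  then have nn: "n \<notin> {i,j}" using assms by auto
  have "(\<Sum>x\<in>PiE I (\<lambda>_. {0..<g}). ind (D g x i j = int a \<and> D g x m n = int b))
      = (\<Sum>y\<in>PiE (I - {n}) (\<lambda>_. {0..<g}). \<Sum>v\<in>{0..<g}.
            ind (D g (y(n := v)) i j = int a \<and> D g (y(n := v)) m n = int b))"
    by (rule sum_PiE_split[OF assms(1,6)])
  also have "\<dots> = (\<Sum>y\<in>PiE (I - {n}) (\<lambda>_. {0..<g}). ind (D g y i j = int a) *
       (\<Sum>v\<in>{0..<g}. ind ((int (y m) - int v) mod int g = int b)))"
    using assms nn by (intro sum.cong refl) (auto simp: D_def ind_def sum_distrib_left intro!: sum.cong)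
  also have "\<dots> = (\<Sum>y\<in>PiE (I - {n}) (\<lambda>_. {0..<g}). ind (D g y i j = int a))"
    using assms by (simp add: one_sol2)
  also have "\<dots> = real g ^ (card (I - {n}) - 1)"
    using assms nn by (intro count1) auto
  also have "card (I - {n}) - 1 = card I - 2" using assms by simp
  finally show ?thesis .
qed



lemma card_pairs: "card {(i,j). 1 \<le> i \<and> i < j \<and> j \<le> (k::nat)} = k choose 2"
proof (induction k)
  case 0
  have e0: "{(i,j). 1 \<le> i \<and> i < j \<and> j \<le> (0::nat)} = {}" by auto
  show ?case unfolding e0 by simp
next
  case (Suc k)
  have e: "{(i,j). 1 \<le> i \<and> i < j \<and> j \<le> Suc k} =
      {(i,j). 1 \<le> i \<and> i < j \<and> j \<le> k} \<union> (\<lambda>i. (i, Suc k)) ` {1..k}" by auto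
  have f: "finite {(i,j). 1 \<le> i \<and> i < j \<and> j \<le> (k::nat)}"
    by (rule finite_subset[of _ "{..k} \<times> {..k}"]) auto
  have "card ({(i,j). 1 \<le> i \<and> i < j \<and> j \<le> k} \<union> (\<lambda>i. (i, Suc k)) ` {1..k})
        = card {(i,j). 1 \<le> i \<and> i < j \<and> j \<le> k} + card ((\<lambda>i. (i, Suc k)) ` {1..k})"
    using f by (intro card_Un_disjoint) auto
  also have "card ((\<lambda>i. (i, Suc k)) ` {1..k}) = k"
    by (subst card_image) (auto simp: inj_on_def)
  also have "Suc k choose 2 = k + (k choose 2)"
    by (simp add: numeral_2_eq_2)
  ultimately show ?case using Suc e by simp
qed

lemma finite_coords: "finite (coords g k)"
  unfolding coords_def
  by (rule finite_subset[of _ "({..k} \<times> {..k}) \<times> {..g}"]) auto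

lemma card_coords: "card (coords g k) = dimd g k"
proof -
  have "coords g k = Sigma {(i,j). 1 \<le> i \<and> i < j \<and> j \<le> k} (\<lambda>_. {1..<g})"
    unfolding coords_def by auto
  then have "card (coords g k) = card {(i,j). 1 \<le> i \<and> i < j \<and> j \<le> k} * card {1..<g}"
    by (simp only: card_cartesian_product)
  then show ?thesis using card_pairs[of k] by (simp add: dimd_def)
qed

lemma finite_Zgk: "finite (Zgk g k)"
  unfolding Zgk_def by (intro finite_PiE) auto

lemma card_Zgk: "card (Zgk g k) = g ^ k"
  unfolding Zgk_def by (simp add: card_PiE_g)

lemma Zvec_coords:
  assumes "((i,j),a) \<in> coords g k"
  shows "Zvec g k x ((i,j),a) = ind (D g x i j = int a) - 1 / real g"
  using assms by (simp add: Zvec_def D_def ind_def)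

lemma Zvec_abs:
  assumes "g \<ge> 2"
  shows "\<bar>Zvec g k x c\<bar> \<le> 1"
proof -
  have "1 / real g \<le> 1" using assms by simp
  then show ?thesis using assms unfolding Zvec_def by (auto split: prod.splits)
qed

lemma Zvec_sum:
  assumes "g \<ge> 2" "c \<in> coords g k"
  shows "(\<Sum>x\<in>Zgk g k. Zvec g k x c) = 0"
proof -
  obtain i j a where c: "c = ((i,j),a)" by (metis prod.collapse)
  have h: "1 \<le> i" "i < j" "j \<le> k" "1 \<le> a" "a < g" using assms c by (auto simp: coords_def)
  have "(\<Sum>x\<in>Zgk g k. Zvec g k x c) = (\<Sum>x\<in>Zgk g k. ind (D g x i j = int a)) - (\<Sum>x\<in>Zgk g k. 1 / real g)"
    using assms c by (simp add: Zvec_coords sum_subtractf)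
  also have "(\<Sum>x\<in>Zgk g k. ind (D g x i j = int a)) = real g ^ (k - 1)"
    unfolding Zgk_def using h by (subst count1) auto
  also have "(\<Sum>x\<in>Zgk g k. 1 / real g) = real g ^ k / real g"
    by (simp add: card_Zgk)
  also have "real g ^ k = real g ^ (k - 1) * real g"
  proof -
    obtain k' where "k = Suc k'" using h by (cases k) auto
    then show ?thesis by simp
  qed
  finally show ?thesis using assms by simp
qed

lemma Zvec_prod:
  assumes "g \<ge> 2" "c \<in> coords g k" "c' \<in> coords g k"
  shows "(\<Sum>x\<in>Zgk g k. Zvec g k x c * Zvec g k x c') = real g ^ k * Mmat g c c'"
proof -
  obtain i j a where c: "c = ((i,j),a)" by (metis prod.collapse)
  obtain m n b where c': "c' = ((m,n),b)" by (metis prod.collapse)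
  have h: "1 \<le> i" "i < j" "j \<le> k" "1 \<le> a" "a < g" using assms c by (auto simp: coords_def)
  have h': "1 \<le> m" "m < n" "n \<le> k" "1 \<le> b" "b < g" using assms c' by (auto simp: coords_def)
  define P where "P x = (D g x i j = int a)" for x
  define Q where "Q x = (D g x m n = int b)" for x
  define G where "G = real g ^ k"
  define p1 where "p1 = real g ^ (k - 1)"
  define p2 where "p2 = real g ^ (k - 2)"
  have gp: "real g > 0" using assms by simp
  obtain k' where kk: "k = Suc (Suc k')" using h by (cases k; cases "k - 1") auto
  have p1: "p1 * real g = G" unfolding p1_def G_def using kk by simp
  have p2: "p2 * real g ^ 2 = G" unfolding p2_def G_def using kk by (simp add: power2_eq_square)
  have sP: "(\<Sum>x\<in>Zgk g k. ind (P x)) = p1"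
    unfolding Zgk_def P_def p1_def using h by (subst count1) auto
  have sQ: "(\<Sum>x\<in>Zgk g k. ind (Q x)) = p1"
    unfolding Zgk_def Q_def p1_def using h' by (subst count1) auto
  have "(\<Sum>x\<in>Zgk g k. Zvec g k x c * Zvec g k x c')
      = (\<Sum>x\<in>Zgk g k. ind (P x \<and> Q x) - ind (P x) / real g - ind (Q x) / real g + 1 / real g ^ 2)"
    using assms c c' by (intro sum.cong refl)
      (simp add: Zvec_coords P_def Q_def ind_def power2_eq_square field_simps)
  also have "\<dots> = (\<Sum>x\<in>Zgk g k. ind (P x \<and> Q x)) - p1 / real g - p1 / real g + G / real g ^ 2"
    by (simp add: sum.distrib sum_subtractf sum_divide_distrib[symmetric] sP sQ card_Zgk G_def)
  also have "(\<Sum>x\<in>Zgk g k. ind (P x \<and> Q x)) =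
      (if (i,j) = (m,n) then (if a = b then p1 else 0) else p2)"
  proof (cases "(i,j) = (m,n)")
    case True
    show ?thesis
    proof (cases "a = b")
      case True
      with \<open>(i,j) = (m,n)\<close> have "\<And>x. (P x \<and> Q x) = P x" by (auto simp: P_def Q_def)
      then show ?thesis using sP True \<open>(i,j) = (m,n)\<close> by simp
    next
      case False
      with \<open>(i,j) = (m,n)\<close> have "\<And>x. ind (P x \<and> Q x) = 0" by (auto simp: P_def Q_def ind_def)
      then show ?thesis using False \<open>(i,j) = (m,n)\<close> by simp
    qed
  next
    case False
    have "{i,j} \<noteq> {m,n}" using False h h' by (auto simp: doubleton_eq_iff)
    then have "(\<Sum>x\<in>Zgk g k. ind (P x \<and> Q x)) = real g ^ (card {1..k} - 2)"
      unfolding Zgk_def P_def Q_def using h h' by (intro count2) auto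
    also have "card {1..k} = k" by simp
    finally show ?thesis by (simp only: if_not_P[OF False] p2_def)
  qed
  finally show ?thesis using c c' p1 p2 gp
    by (auto simp: Mmat_def G_def[symmetric] field_simps power2_eq_square)
qed



lemma Bdelta_bound:
  assumes "\<theta> \<in> Bdelta g k \<delta>" "c \<in> coords g k"
  shows "\<bar>\<theta> c\<bar> < \<delta>"
proof -
  from assms obtain \<zeta> and m :: int where "- pi \<le> \<theta> c" "\<theta> c < pi" "\<bar>\<zeta>\<bar> < \<delta>" "\<theta> c = \<zeta> + 2 * pi * of_int m"
    unfolding Bdelta_def by blast
  then show ?thesis by (rule theta_bound)
qed

lemma Re_term: "Re (complex_of_real r * exp (\<i> * complex_of_real y)) = r * cos y"
  by (simp add: cis_conv_exp[symmetric])

lemma Im_term: "Im (complex_of_real r * exp (\<i> * complex_of_real y)) = r * sin y"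
  by (simp add: cis_conv_exp[symmetric])

lemma Phi_Re: "Re (Phi g k \<theta>) = (\<Sum>x\<in>Zgk g k. cos (\<Sum>c\<in>coords g k. \<theta> c * Zvec g k x c) / real g ^ k)"
  unfolding Phi_def Re_sum Re_term by simp

lemma Phi_Im: "Im (Phi g k \<theta>) = (\<Sum>x\<in>Zgk g k. sin (\<Sum>c\<in>coords g k. \<theta> c * Zvec g k x c) / real g ^ k)"
  unfolding Phi_def Im_sum Im_term by simp

lemma main_bounds:
  fixes g k :: nat and \<delta> :: real
  assumes g2: "g \<ge> 2" and "k \<ge> 2" and "\<delta> > 0" and th: "\<theta> \<in> Bdelta g k \<delta>"
  defines "t \<equiv> real (dimd g k) * \<delta>"
  shows "0 \<le> quadM g k \<theta>" "quadM g k \<theta> \<le> t^2"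
    "\<bar>Re (Phi g k \<theta>) - (1 - quadM g k \<theta> / 2)\<bar> \<le> t^4/24"
    "\<bar>Im (Phi g k \<theta>)\<bar> \<le> t^3/6" "0 \<le> t"
proof -
  define C where "C = coords g k"
  define X where "X = Zgk g k"
  define G where "G = real g ^ k"
  define s where "s x = (\<Sum>c\<in>C. \<theta> c * Zvec g k x c)" for x
  have fC: "finite C" unfolding C_def by (rule finite_coords)
  have fX: "finite X" unfolding X_def by (rule finite_Zgk)
  have cX: "real (card X) = G" unfolding X_def G_def by (simp add: card_Zgk)
  have Gp: "G > 0" unfolding G_def using g2 by simp
  show t0: "0 \<le> t" unfolding t_def using assms by simp
  have sb: "\<bar>s x\<bar> \<le> t" for x
  proof -
    have "\<bar>s x\<bar> \<le> (\<Sum>c\<in>C. \<bar>\<theta> c * Zvec g k x c\<bar>)" unfolding s_def by (rule sum_abs)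
    also have "\<dots> \<le> (\<Sum>c\<in>C. \<delta>)"
    proof (intro sum_mono)
      fix c assume "c \<in> C"
      then have "\<bar>\<theta> c\<bar> \<le> \<delta>" using Bdelta_bound[OF th] unfolding C_def by fastforce
      moreover have "\<bar>Zvec g k x c\<bar> \<le> 1" by (rule Zvec_abs[OF g2])
      ultimately have "\<bar>\<theta> c\<bar> * \<bar>Zvec g k x c\<bar> \<le> \<delta> * 1"
        by (intro mult_mono) auto
      then show "\<bar>\<theta> c * Zvec g k x c\<bar> \<le> \<delta>" by (simp add: abs_mult)
    qed
    also have "\<dots> = t" unfolding t_def C_def by (simp add: card_coords)
    finally show ?thesis .
  qed
  have s1: "(\<Sum>x\<in>X. s x) = 0"
  proof -
    have "(\<Sum>x\<in>X. s x) = (\<Sum>c\<in>C. \<theta> c * (\<Sum>x\<in>X. Zvec g k x c))"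
      unfolding s_def by (subst sum.swap) (simp add: sum_distrib_left)
    also have "\<dots> = 0" using Zvec_sum[OF g2] unfolding C_def X_def by simp
    finally show ?thesis .
  qed
  have s2: "(\<Sum>x\<in>X. (s x)^2) = G * quadM g k \<theta>"
  proof -
    have "(\<Sum>x\<in>X. (s x)^2) = (\<Sum>x\<in>X. \<Sum>c\<in>C. \<Sum>c'\<in>C. (\<theta> c * \<theta> c') * (Zvec g k x c * Zvec g k x c'))"
      unfolding s_def power2_eq_square
      by (intro sum.cong refl) (simp add: sum_product mult_ac)
    also have "\<dots> = (\<Sum>c\<in>C. \<Sum>c'\<in>C. \<Sum>x\<in>X. (\<theta> c * \<theta> c') * (Zvec g k x c * Zvec g k x c'))"
      by (subst sum.swap) (simp add: sum.swap[of _ X])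
    also have "\<dots> = (\<Sum>c\<in>C. \<Sum>c'\<in>C. (\<theta> c * \<theta> c') * (G * Mmat g c c'))"
      by (intro sum.cong refl)
        (simp add: sum_distrib_left[symmetric] Zvec_prod[OF g2] C_def X_def G_def)
    also have "\<dots> = G * quadM g k \<theta>"
      unfolding quadM_def C_def by (simp add: sum_distrib_left mult_ac)
    finally show ?thesis .
  qed
  have q: "quadM g k \<theta> = (\<Sum>x\<in>X. (s x)^2) / G" using s2 Gp by simp
  show "0 \<le> quadM g k \<theta>" unfolding q using Gp by (simp add: sum_nonneg)
  have "(\<Sum>x\<in>X. (s x)^2) \<le> (\<Sum>x\<in>X. t^2)"
  proof (intro sum_mono)
    fix x assume "x \<in> X"
    have "\<bar>s x\<bar>^2 \<le> t^2" using sb[of x] by (intro power_mono) auto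
    then show "(s x)^2 \<le> t^2" by simp
  qed
  then show "quadM g k \<theta> \<le> t^2" unfolding q using Gp cX by (simp add: divide_simps mult.commute)
  have s4: "(s x)^4 \<le> t^4" for x
  proof -
    have "\<bar>s x\<bar>^4 \<le> t^4" using sb[of x] by (intro power_mono) auto
    moreover have "\<bar>s x\<bar>^4 = (s x)^4" by (rule power_even_abs) simp
    ultimately show ?thesis by simp
  qed
  have s3: "\<bar>s x\<bar>^3 \<le> t^3" for x using sb[of x] by (intro power_mono) auto
  have re: "Re (Phi g k \<theta>) = (\<Sum>x\<in>X. cos (s x)) / G"
    unfolding Phi_Re s_def C_def X_def G_def by (simp add: sum_divide_distrib)
  have im: "Im (Phi g k \<theta>) = (\<Sum>x\<in>X. sin (s x)) / G"
    unfolding Phi_Im s_def C_def X_def G_def by (simp add: sum_divide_distrib)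
  have e1: "(\<Sum>x\<in>X. cos (s x) - (1 - (s x)^2/2)) = (\<Sum>x\<in>X. cos (s x)) - G + (\<Sum>x\<in>X. (s x)^2)/2"
  proof -
    have "(\<Sum>x\<in>X. cos (s x) - (1 - (s x)^2/2)) = (\<Sum>x\<in>X. cos (s x)) - (\<Sum>x\<in>X. 1 - (s x)^2/2)"
      by (rule sum_subtractf)
    also have "(\<Sum>x\<in>X. 1 - (s x)^2/2) = (\<Sum>x\<in>X. (1::real)) - (\<Sum>x\<in>X. (s x)^2/2)"
      by (rule sum_subtractf)
    also have "(\<Sum>x\<in>X. (1::real)) = G" using cX by simp
    also have "(\<Sum>x\<in>X. (s x)^2/2) = (\<Sum>x\<in>X. (s x)^2)/2"
      by (rule sum_divide_distrib[symmetric])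
    finally show ?thesis by simp
  qed
  have "Re (Phi g k \<theta>) - (1 - quadM g k \<theta> / 2) = (\<Sum>x\<in>X. cos (s x) - (1 - (s x)^2/2)) / G"
    unfolding re q e1 using Gp by (simp add: field_simps)
  also have "\<bar>\<dots>\<bar> \<le> (\<Sum>x\<in>X. t^4/24) / G"
  proof -
    have "\<bar>\<Sum>x\<in>X. cos (s x) - (1 - (s x)^2/2)\<bar> \<le> (\<Sum>x\<in>X. \<bar>cos (s x) - (1 - (s x)^2/2)\<bar>)" (is "\<bar>?a\<bar> \<le> _")
      by (rule sum_abs)
    also have "\<dots> \<le> (\<Sum>x\<in>X. t^4/24)" (is "_ \<le> ?b")
    proof (rule sum_mono)
      fix x assume "x \<in> X"
      show "\<bar>cos (s x) - (1 - (s x)^2/2)\<bar> \<le> t^4/24"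
        by (rule order.trans[OF cos_taylor4 divide_right_mono[OF s4]]) simp
    qed
    finally have A: "\<bar>?a\<bar> \<le> ?b" .
    have "\<bar>?a / G\<bar> = \<bar>?a\<bar> / G" using Gp by (simp add: abs_divide)
    also have "\<dots> \<le> ?b / G" by (rule divide_right_mono[OF A]) (use Gp in simp)
    finally show ?thesis .
  qed
  also have "\<dots> = t^4/24" using cX Gp by simp
  finally show "\<bar>Re (Phi g k \<theta>) - (1 - quadM g k \<theta> / 2)\<bar> \<le> t^4/24" .
  have "Im (Phi g k \<theta>) = (\<Sum>x\<in>X. sin (s x) - s x) / G"
    unfolding im by (simp add: sum_subtractf s1)
  also have "\<bar>\<dots>\<bar> \<le> (\<Sum>x\<in>X. t^3/6) / G"
  proof -
    have "\<bar>\<Sum>x\<in>X. sin (s x) - s x\<bar> \<le> (\<Sum>x\<in>X. \<bar>sin (s x) - s x\<bar>)" (is "\<bar>?a\<bar> \<le> _")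
      by (rule sum_abs)
    also have "\<dots> \<le> (\<Sum>x\<in>X. t^3/6)" (is "_ \<le> ?b")
    proof (rule sum_mono)
      fix x assume "x \<in> X"
      show "\<bar>sin (s x) - s x\<bar> \<le> t^3/6"
        by (rule order.trans[OF sin_taylor3 divide_right_mono[OF s3]]) simp
    qed
    finally have A: "\<bar>?a\<bar> \<le> ?b" .
    have "\<bar>?a / G\<bar> = \<bar>?a\<bar> / G" using Gp by (simp add: abs_divide)
    also have "\<dots> \<le> ?b / G" by (rule divide_right_mono[OF A]) (use Gp in simp)
    finally show ?thesis .
  qed
  also have "\<dots> = t^3/6" using cX Gp by simp
  finally show "\<bar>Im (Phi g k \<theta>)\<bar> \<le> t^3/6" .
qed

theorem lemma4p5:
  fixes g k :: nat and \<delta> :: real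
  assumes "g \<ge> 2" and "k \<ge> 2" and "\<delta> > 0"
  shows "(\<exists>\<epsilon> :: (((nat \<times> nat) \<times> nat) \<Rightarrow> real) \<Rightarrow> real.
            \<forall>\<theta>\<in>Bdelta g k \<delta>.
              Re (Phi g k \<theta>) = exp (- (1/2) * quadM g k \<theta>) * (1 + \<epsilon> \<theta>) \<and>
              \<bar>\<epsilon> \<theta>\<bar> \<le> (1/6) * (real (dimd g k) * \<delta>) ^ 4
                         * exp ((1/2) * real (dimd g k) ^ 2 * \<delta> ^ 2))
       \<and> (\<forall>\<theta>\<in>Bdelta g k \<delta>. \<bar>Im (Phi g k \<theta>)\<bar> \<le> (real (dimd g k) * \<delta>) ^ 3 / 6)
       \<and> (real (dimd g k) * \<delta> < 1 \<longrightarrow> (\<forall>\<theta>\<in>Bdelta g k \<delta>. Re (Phi g k \<theta>) > 1/3))"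
proof (intro conjI)
  define t where "t = real (dimd g k) * \<delta>"
  have e: "exp ((1/2) * real (dimd g k) ^ 2 * \<delta> ^ 2) = exp (t^2/2)"
    unfolding t_def by (simp add: power_mult_distrib)
  show "\<exists>\<epsilon> :: (((nat \<times> nat) \<times> nat) \<Rightarrow> real) \<Rightarrow> real.
            \<forall>\<theta>\<in>Bdelta g k \<delta>.
              Re (Phi g k \<theta>) = exp (- (1/2) * quadM g k \<theta>) * (1 + \<epsilon> \<theta>) \<and>
              \<bar>\<epsilon> \<theta>\<bar> \<le> (1/6) * (real (dimd g k) * \<delta>) ^ 4
                         * exp ((1/2) * real (dimd g k) ^ 2 * \<delta> ^ 2)"
  proof (intro exI[of _ "\<lambda>\<theta>. Re (Phi g k \<theta>) * exp (quadM g k \<theta> / 2) - 1"] ballI conjI)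
    fix \<theta> assume th: "\<theta> \<in> Bdelta g k \<delta>"
    have "exp (- (1/2) * quadM g k \<theta>) * exp (quadM g k \<theta> / 2) = 1"
      by (simp add: exp_add[symmetric])
    moreover have h: "1 + (R * E - 1) = R * E" for R E :: real by simp
    ultimately show "Re (Phi g k \<theta>) = exp (- (1/2) * quadM g k \<theta>) *
        (1 + (Re (Phi g k \<theta>) * exp (quadM g k \<theta> / 2) - 1))"
      unfolding h by (metis mult.left_commute mult.right_neutral)
    note mb = main_bounds[OF assms th]
    show "\<bar>Re (Phi g k \<theta>) * exp (quadM g k \<theta> / 2) - 1\<bar> \<le> (1/6) * (real (dimd g k) * \<delta>) ^ 4
                         * exp ((1/2) * real (dimd g k) ^ 2 * \<delta> ^ 2)"
    proof -
      have "\<bar>Re (Phi g k \<theta>) * exp (quadM g k \<theta> / 2) - 1\<bar> \<le> 1/6 * (real (dimd g k) * \<delta>)^4 * exp ((real (dimd g k) * \<delta>)^2/2)"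
        by (rule finish[OF mb(1,2,3)])
      then show ?thesis unfolding e t_def .
    qed
  qed
  show "\<forall>\<theta>\<in>Bdelta g k \<delta>. \<bar>Im (Phi g k \<theta>)\<bar> \<le> (real (dimd g k) * \<delta>) ^ 3 / 6"
  proof
    fix \<theta> assume "\<theta> \<in> Bdelta g k \<delta>"
    then show "\<bar>Im (Phi g k \<theta>)\<bar> \<le> (real (dimd g k) * \<delta>) ^ 3 / 6"
      by (rule main_bounds(4)[OF assms])
  qed
  show "real (dimd g k) * \<delta> < 1 \<longrightarrow> (\<forall>\<theta>\<in>Bdelta g k \<delta>. Re (Phi g k \<theta>) > 1/3)"
  proof (intro impI ballI)
    fix \<theta> assume t1: "real (dimd g k) * \<delta> < 1" and th: "\<theta> \<in> Bdelta g k \<delta>"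
    note mb = main_bounds[OF assms th, folded t_def]
    have t1': "t < 1" using t1 unfolding t_def .
    have "t^2 \<le> 1" using mb(5) t1' by (simp add: power_le_one)
    moreover have "t^4 \<le> 1" using mb(5) t1' by (simp add: power_le_one)
    moreover have "t^2 < 1" using mb(5) t1' by (simp add: power_less_one_iff)
    moreover have "Re (Phi g k \<theta>) \<ge> 1 - quadM g k \<theta> / 2 - t^4/24"
      using abs_le_D2[OF mb(3)] by linarith
    ultimately show "Re (Phi g k \<theta>) > 1/3" using mb(2) by linarith
  qed
qed


end
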